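(* Let $X$ be a Polish space, let $\Lambda$ be a Borel subset of $X$, and let $T_1,T_2$ be continuous self-maps of $X$. Assume that for every compact set $K\subseteq X$ with $K\cap\Lambda=\emptyset$ there exists an infinite set $I\subseteq\mathbb N$ such that no point $x\in X$ belongs to $T_1^{-n}(K)\cap T_2^{-n}(K)$ for infinitely many $n\in I$. Then, whenever $m_1$ is a $T_1$-invariant Borel probability measure on $X$ and $m_2$ is a $T_2$-invariant Borel probability measure on $X$ with $m_1(\Lambda)=0=m_2(\Lambda)$, the measures $m_1$ and $m_2$ are mutually singular.
   Context: A Borel probability measure $m$ is $T$-invariant if $m(T^{-1}(A))=m(A)$ for every Borel set $A$. *)

theory Defs
  imports "HOL-Probability.Probability"
begin

definition borel_prob :: "'a::topological_space measure \<Rightarrow> bool" where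
  "borel_prob m \<longleftrightarrow> prob_space m \<and> sets m = sets borel"

definition invariant_measure :: "('a::topological_space \<Rightarrow> 'a) \<Rightarrow> 'a measure \<Rightarrow> bool" where
  "invariant_measure T m \<longleftrightarrow> (\<forall>A \<in> sets borel. emeasure m (T -` A) = emeasure m A)"

definition mutually_singular :: "'a::topological_space measure \<Rightarrow> 'a measure \<Rightarrow> bool" where
  "mutually_singular m1 m2 \<longleftrightarrow>
     (\<exists>A \<in> sets borel. emeasure m1 A = 0 \<and> emeasure m2 (UNIV - A) = 0)"

end

theory Submission
  imports Defs
begin

lemma funpow_meas:
  assumes "continuous_on UNIV (T::'a::topological_space \<Rightarrow> 'a)"
  shows "(T ^^ n) \<in> borel_measurable borel"
proof (induction n)
  case 0 then show ?case by simp
next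
  case (Suc n)
  have "T \<in> borel_measurable borel" using assms by (rule borel_measurable_continuous_onI)
  then show ?case using Suc by (simp add: measurable_comp)
qed

lemma funpow_vimage_borel:
  assumes "continuous_on UNIV (T::'a::topological_space \<Rightarrow> 'a)" "A \<in> sets borel"
  shows "(T ^^ n) -` A \<in> sets borel"
  using measurable_sets[OF funpow_meas[OF assms(1)] assms(2)] by simp

lemma funpow_inv:
  assumes "continuous_on UNIV (T::'a::topological_space \<Rightarrow> 'a)" "invariant_measure T m"
    "A \<in> sets borel"
  shows "emeasure m ((T ^^ n) -` A) = emeasure m A"
proof (induction n)
  case 0 then show ?case by simp
next
  case (Suc n)
  have "(T ^^ Suc n) -` A = T -` ((T ^^ n) -` A)"
    by (simp only: funpow_Suc_right vimage_comp)
  also have "emeasure m \<dots> = emeasure m ((T ^^ n) -` A)"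
    using assms(2) funpow_vimage_borel[OF assms(1,3)] unfolding invariant_measure_def by blast
  also have "\<dots> = emeasure m A" by (rule Suc.IH)
  finally show ?case .
qed

lemma borel_prob_facts:
  assumes "borel_prob m"
  shows "prob_space m" "sets m = sets borel" "space m = UNIV"
  using assms unfolding borel_prob_def
  by (auto dest: sets_eq_imp_space_eq)

lemma compact_approx:
  fixes m :: "'a::polish_space measure"
  assumes "borel_prob m" "B \<in> sets borel" "e > 0"
  shows "\<exists>K. compact K \<and> K \<subseteq> B \<and> measure m (B - K) < e"
proof -
  interpret prob_space m using borel_prob_facts[OF assms(1)] by simp
  have sm: "sets m = sets borel" using borel_prob_facts[OF assms(1)] by simp
  have fin: "emeasure m (space m) \<noteq> \<infinity>" by simp
  have eq: "emeasure m B = (SUP K \<in> {K. K \<subseteq> B \<and> compact K}. emeasure m K)"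
    by (rule inner_regular[OF sm fin assms(2)])
  show ?thesis
  proof (cases "measure m B < e")
    case True then show ?thesis by (intro exI[of _ "{}"]) auto
  next
    case False
  have "ennreal (measure m B - e) < emeasure m B"
    using False assms(3) by (simp add: emeasure_eq_measure ennreal_lessI)
  then obtain K where K: "K \<subseteq> B" "compact K" "ennreal (measure m B - e) < emeasure m K"
    unfolding eq by (auto simp: less_SUP_iff)
  have Kb: "K \<in> sets m" using K(2) sm by (simp add: compact_imp_closed borel_closed)
  have Bb: "B \<in> sets m" using assms(2) sm by simp
  have "measure m B - e < measure m K"
    using K(3) False by (simp add: emeasure_eq_measure ennreal_less_iff)
  then have "measure m (B - K) < e" using Kb Bb K(1) by (simp add: finite_measure_Diff)
  then show ?thesis using K by blast
  qed
qed

lemma sing_from_approx: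
  fixes m1 m2 :: "'a::topological_space measure"
  assumes b1: "borel_prob m1" and b2: "borel_prob m2"
    and ap: "\<And>e. e > 0 \<Longrightarrow> \<exists>E\<in>sets borel. measure m1 E < e \<and> measure m2 (UNIV - E) < e"
  shows "mutually_singular m1 m2"
proof -
  interpret p1: prob_space m1 using borel_prob_facts[OF b1] by simp
  interpret p2: prob_space m2 using borel_prob_facts[OF b2] by simp
  have s1: "sets m1 = sets borel" and s2: "sets m2 = sets borel"
    using borel_prob_facts[OF b1] borel_prob_facts[OF b2] by auto
  have "\<forall>k::nat. \<exists>E\<in>sets borel. measure m1 E < (1/2)^k \<and> measure m2 (UNIV - E) < (1/2)^k"
    using ap by simp
  then obtain E where E: "\<And>k. E k \<in> sets borel" "\<And>k. measure m1 (E k) < (1/2)^k"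
      "\<And>k. measure m2 (UNIV - E k) < (1/2)^k"
    by metis
  define A where "A = (\<Inter>N. \<Union>k\<in>{N..}. E k)"
  have Ab: "A \<in> sets borel" unfolding A_def using E(1) by auto
  have "limsup E \<in> null_sets m1"
  proof (rule borel_cantelli_limsup1)
    show "\<And>n. E n \<in> sets m1" using E(1) s1 by simp
    show "\<And>n. emeasure m1 (E n) < \<infinity>" by (simp add: p1.emeasure_eq_measure)
    show "summable (\<lambda>n. measure m1 (E n))"
      by (rule summable_comparison_test[of _ "\<lambda>n. (1/2::real)^n"])
         (use E(2) less_imp_le in auto)
  qed
  then have A1: "emeasure m1 A = 0" unfolding A_def limsup_INF_SUP by auto
  have null: "(\<Inter>k\<in>{N..}. UNIV - E k) \<in> null_sets m2" for N
  proof -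
    let ?S = "\<Inter>k\<in>{N..}. UNIV - E k"
    have Sb: "?S \<in> sets m2" using E(1) s2 by auto
    have le: "measure m2 ?S \<le> (1/2)^j" for j
    proof -
      have "measure m2 ?S \<le> measure m2 (UNIV - E (N + j))"
        by (rule p2.finite_measure_mono) (use E(1) s2 in auto)
      also have "\<dots> < (1/2)^(N+j)" by (rule E(3))
      also have "\<dots> \<le> (1/2)^j" by (simp add: power_add mult_le_one power_le_one)
      finally show ?thesis by simp
    qed
    have "measure m2 ?S = 0"
    proof (rule ccontr)
      assume "measure m2 ?S \<noteq> 0"
      then have "measure m2 ?S > 0" using measure_nonneg[of m2 ?S] by linarith
      then obtain j where "(1/2::real)^j < measure m2 ?S" using real_arch_pow_inv[of "measure m2 ?S" "1/2"] by auto
      then show False using le[of j] by simp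
    qed
    then show ?thesis using Sb by (simp add: p2.emeasure_eq_measure null_sets_def)
  qed
  have "(\<Union>N. \<Inter>k\<in>{N..}. UNIV - E k) \<in> null_sets m2"
    using null by (intro null_sets_UN) auto
  moreover have "UNIV - A = (\<Union>N. \<Inter>k\<in>{N..}. UNIV - E k)" unfolding A_def by auto
  ultimately have "emeasure m2 (UNIV - A) = 0" by auto
  then show ?thesis unfolding mutually_singular_def using Ab A1 by blast
qed

theorem theorem3p2:
  fixes \<Lambda> :: "'a::polish_space set"
    and T1 T2 :: "'a \<Rightarrow> 'a"
    and m1 m2 :: "'a measure"
  assumes "\<Lambda> \<in> sets borel"
    and "continuous_on UNIV T1" and "continuous_on UNIV T2"
    and "\<And>K. compact K \<Longrightarrow> K \<inter> \<Lambda> = {} \<Longrightarrow>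
           \<exists>I :: nat set. infinite I \<and>
             (\<forall>x. finite {n \<in> I. x \<in> (T1 ^^ n) -` K \<inter> (T2 ^^ n) -` K})"
    and "borel_prob m1" and "invariant_measure T1 m1"
    and "borel_prob m2" and "invariant_measure T2 m2"
    and "emeasure m1 \<Lambda> = 0" and "emeasure m2 \<Lambda> = 0"
  shows "mutually_singular m1 m2"
proof (rule sing_from_approx[OF assms(5,7)])
  fix e :: real assume e: "e > 0"
  interpret p1: prob_space m1 using borel_prob_facts[OF assms(5)] by simp
  interpret p2: prob_space m2 using borel_prob_facts[OF assms(7)] by simp
  have s1: "sets m1 = sets borel" and s2: "sets m2 = sets borel"
    using borel_prob_facts[OF assms(5)] borel_prob_facts[OF assms(7)] by auto
  have Lb: "UNIV - \<Lambda> \<in> sets borel" using assms(1) by auto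
  have L1: "\<Lambda> \<in> null_sets m1" using assms(1,9) s1 by auto
  have L2: "\<Lambda> \<in> null_sets m2" using assms(1,10) s2 by auto
  obtain K1 where K1: "compact K1" "K1 \<subseteq> UNIV - \<Lambda>" "measure m1 ((UNIV - \<Lambda>) - K1) < e/2"
    using compact_approx[OF assms(5) Lb, of "e/2"] e by auto
  obtain K2 where K2: "compact K2" "K2 \<subseteq> UNIV - \<Lambda>" "measure m2 ((UNIV - \<Lambda>) - K2) < e/2"
    using compact_approx[OF assms(7) Lb, of "e/2"] e by auto
  define K where "K = K1 \<union> K2"
  have Kc: "compact K" unfolding K_def using K1 K2 by auto
  have KL: "K \<inter> \<Lambda> = {}" unfolding K_def using K1 K2 by auto
  have Kb: "K \<in> sets borel" using Kc by (simp add: compact_imp_closed borel_closed)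
  have cKb: "UNIV - K \<in> sets borel" using Kb by auto
  have mK1: "measure m1 (UNIV - K) < e/2"
  proof -
    have "measure m1 (UNIV - K) \<le> measure m1 (((UNIV - \<Lambda>) - K1) \<union> \<Lambda>)"
      by (rule p1.finite_measure_mono) (use assms(1) s1 Kb K1 in \<open>auto simp: K_def compact_imp_closed borel_closed\<close>)
    also have "\<dots> = measure m1 ((UNIV - \<Lambda>) - K1)"
      by (rule measure_Un_null_set) (use assms(1) s1 K1 L1 in \<open>auto simp: compact_imp_closed borel_closed\<close>)
    finally show ?thesis using K1(3) by simp
  qed
  have mK2: "measure m2 (UNIV - K) < e/2"
  proof -
    have "measure m2 (UNIV - K) \<le> measure m2 (((UNIV - \<Lambda>) - K2) \<union> \<Lambda>)"
      by (rule p2.finite_measure_mono) (use assms(1) s2 Kb K2 in \<open>auto simp: K_def compact_imp_closed borel_closed\<close>)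
    also have "\<dots> = measure m2 ((UNIV - \<Lambda>) - K2)"
      by (rule measure_Un_null_set) (use assms(1) s2 K2 L2 in \<open>auto simp: compact_imp_closed borel_closed\<close>)
    finally show ?thesis using K2(3) by simp
  qed
  obtain I where I: "infinite I" "\<And>x. finite {n \<in> I. x \<in> (T1 ^^ n) -` K \<inter> (T2 ^^ n) -` K}"
    using assms(4)[OF Kc KL] by blast
  define C where "C N = (\<Union>n\<in>{n\<in>I. N \<le> n}. (T1 ^^ n) -` K \<inter> (T2 ^^ n) -` K)" for N
  have Cb: "C N \<in> sets borel" for N
    unfolding C_def using funpow_vimage_borel[OF assms(2) Kb] funpow_vimage_borel[OF assms(3) Kb]
    by (intro sets.countable_UN'') auto
  have dec: "decseq C" unfolding decseq_def C_def by auto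
  have empty: "(\<Inter>N. C N) = {}"
  proof safe
    fix x assume x: "x \<in> (\<Inter>N. C N)"
    obtain B where B: "\<forall>n\<in>{n \<in> I. x \<in> (T1 ^^ n) -` K \<inter> (T2 ^^ n) -` K}. n \<le> B"
      using I(2)[of x] finite_nat_set_iff_bounded_le by blast
    from x have "x \<in> C (Suc B)" by blast
    then show "x \<in> {}" using B unfolding C_def by force
  qed
  have "(\<lambda>N. measure m2 (C N)) \<longlonglongrightarrow> measure m2 (\<Inter>N. C N)"
    by (rule p2.finite_Lim_measure_decseq) (use Cb s2 dec in auto)
  then have "(\<lambda>N. measure m2 (C N)) \<longlonglongrightarrow> 0" using empty by simp
  then have "eventually (\<lambda>N. measure m2 (C N) < e/2) sequentially"
    using e by (intro order_tendstoD(2)) auto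
  then obtain N where N: "measure m2 (C N) < e/2"
    unfolding eventually_sequentially by blast
  obtain n where n: "n \<in> I" "N \<le> n"
    using I(1) by (metis infinite_nat_iff_unbounded_le)
  define E where "E = (T1 ^^ n) -` (UNIV - K)"
  have Eb: "E \<in> sets borel" unfolding E_def using funpow_vimage_borel[OF assms(2) cKb] .
  have "measure m1 E = measure m1 (UNIV - K)"
    unfolding E_def measure_def using funpow_inv[OF assms(2,6) cKb] by simp
  then have mE: "measure m1 E < e" using mK1 e by simp
  have "measure m2 (UNIV - E) \<le> measure m2 (C N \<union> (T2 ^^ n) -` (UNIV - K))"
    by (rule p2.finite_measure_mono)
       (use n Cb funpow_vimage_borel[OF assms(3) cKb] s2 in \<open>auto simp: E_def C_def\<close>)
  also have "\<dots> \<le> measure m2 (C N) + measure m2 ((T2 ^^ n) -` (UNIV - K))"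
    by (rule measure_Un_le) (use Cb funpow_vimage_borel[OF assms(3) cKb] s2 in auto)
  also have "measure m2 ((T2 ^^ n) -` (UNIV - K)) = measure m2 (UNIV - K)"
    unfolding measure_def using funpow_inv[OF assms(3,8) cKb] by simp
  finally have "measure m2 (UNIV - E) < e" using N mK2 by simp
  then show "\<exists>E\<in>sets borel. measure m1 E < e \<and> measure m2 (UNIV - E) < e"
    using Eb mE by blast
qed

end
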